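(* Let $(\mathfrak g,\Delta)$ be a perm coalgebra, $r=\sum r^1\otimes r^2\in\mathfrak g\otimes\mathfrak g$ symmetric with $$r^1{}_{(1)}\otimes r^1{}_{(2)}\otimes r^2+r^1{}_{(1)}\otimes r^2\otimes r^1{}_{(2)}-r^1{}_{(2)}\otimes r^2\otimes r^1{}_{(1)}-r^2\otimes r^1{}_{(2)}\otimes r^1{}_{(1)}=0$$ (i.e. $(\mathfrak g,\Delta,r)$ is a cosymplectic perm coalgebra), and $\omega\in(\mathfrak g\otimes\mathfrak g)^*$ symmetric. Assume (i) $\omega$ satisfies the classical co-perm Yang–Baxter equation in $(\mathfrak g,\Delta)$, so that $(\mathfrak g,\Delta,\omega,\cdot_\omega)$ is a dual quasitriangular perm bialgebra, and (ii) $r$ satisfies the classical perm Yang–Baxter equation in the algebra $(\mathfrak g,\cdot_\omega)$, so that $(\mathfrak g,\cdot_\omega,r,\Delta_r)$ (with $\Delta_r$ formed using $\cdot_\omega$) is a quasitriangular perm bialgebra. Then $S:\mathfrak g\to\mathfrak g$, $S(x)=r^1\omega(r^2,x)$, makes $(\mathfrak g,\Delta,S)$ a Nijenhuis perm coalgebra, i.e. for all $x$: $$S(x_{(1)})\otimes S(x_{(2)})+S^2(x)_{(1)}\otimes S^2(x)_{(2)}=S(S(x)_{(1)})\otimes S(x)_{(2)}+S(x)_{(1)}\otimes S(S(x)_{(2)}).$$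
   Context: Over a field $K$; Sweedler notation $\Delta(x)=x_{(1)}\otimes x_{(2)}$. A perm coalgebra $(\mathfrak g,\Delta)$: $x_{(1)(1)}\otimes x_{(1)(2)}\otimes x_{(2)}=x_{(1)}\otimes x_{(2)(1)}\otimes x_{(2)(2)}=x_{(1)}\otimes x_{(2)(2)}\otimes x_{(2)(1)}$. $\omega$ symmetric: $\omega(x,y)=\omega(y,x)$; $r$ symmetric: invariant under the flip. Classical co-perm Yang–Baxter equation in $(\mathfrak g,\Delta)$: $\omega(x_{(1)},z)\omega(x_{(2)},y)-\omega(x,z_{(1)})\omega(y,z_{(2)})+\omega(y_{(1)},z)\omega(x,y_{(2)})-\omega(x,y_{(1)})\omega(y_{(2)},z)=0$; $x\cdot_\omega y=x_{(1)}\omega(x_{(2)},y)+y_{(1)}\omega(x,y_{(2)})-y_{(2)}\omega(x,y_{(1)})$. For a product $\cdot$ and $r$ with second copy $\bar r$: classical perm Yang–Baxter equation $r^1\bar r^1\otimes\bar r^2\otimes r^2-r^1\otimes\bar r^1\otimes r^2\bar r^2+\bar r^1\otimes r^1\bar r^2\otimes r^2-r^1\otimes r^2\bar r^1\otimes\bar r^2=0$ (products taken in $\cdot$), and $\Delta_r(x)=x\cdot r^1\otimes r^2+r^1\otimes x\cdot r^2-r^1\otimes r^2\cdot x$. *)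

theory Defs
  imports Complex_Main
begin

text \<open>The vector space g over the field K is a type 'v with a scalar multiplication
  scale :: 'k \<Rightarrow> 'v \<Rightarrow> 'v satisfying vector_space scale (no dimension restriction).
  Elements of g\<otimes>g (resp. g\<otimes>g\<otimes>g) are represented by formal finite sums
  (lists of pairs / triples); two formal sums represent the same tensor iff they
  agree under every bilinear (resp. trilinear) form, since (V\<otimes>W)* = Bil(V,W;K).\<close>

definition lin_form :: "('k::field \<Rightarrow> 'v::ab_group_add \<Rightarrow> 'v) \<Rightarrow> ('v \<Rightarrow> 'k) \<Rightarrow> bool" where
  "lin_form scale f \<longleftrightarrow> Vector_Spaces.linear scale (*) f"

definition bilin_form :: "('k::field \<Rightarrow> 'v::ab_group_add \<Rightarrow> 'v) \<Rightarrow> ('v \<Rightarrow> 'v \<Rightarrow> 'k) \<Rightarrow> bool" where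
  "bilin_form scale B \<longleftrightarrow> (\<forall>y. lin_form scale (\<lambda>x. B x y)) \<and> (\<forall>x. lin_form scale (B x))"

definition trilin_form :: "('k::field \<Rightarrow> 'v::ab_group_add \<Rightarrow> 'v) \<Rightarrow> ('v \<Rightarrow> 'v \<Rightarrow> 'v \<Rightarrow> 'k) \<Rightarrow> bool" where
  "trilin_form scale T \<longleftrightarrow>
     (\<forall>y z. lin_form scale (\<lambda>x. T x y z)) \<and> (\<forall>x z. lin_form scale (\<lambda>y. T x y z))
     \<and> (\<forall>x y. lin_form scale (T x y))"

definition teq2 :: "('k::field \<Rightarrow> 'v::ab_group_add \<Rightarrow> 'v) \<Rightarrow> ('v \<times> 'v) list \<Rightarrow> ('v \<times> 'v) list \<Rightarrow> bool" where
  "teq2 scale xs ys \<longleftrightarrow> (\<forall>B. bilin_form scale B \<longrightarrow>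
     (\<Sum>(a,b)\<leftarrow>xs. B a b) = (\<Sum>(a,b)\<leftarrow>ys. B a b))"

definition teq3 :: "('k::field \<Rightarrow> 'v::ab_group_add \<Rightarrow> 'v) \<Rightarrow> ('v \<times> 'v \<times> 'v) list \<Rightarrow> ('v \<times> 'v \<times> 'v) list \<Rightarrow> bool" where
  "teq3 scale xs ys \<longleftrightarrow> (\<forall>T. trilin_form scale T \<longrightarrow>
     (\<Sum>(a,b,c)\<leftarrow>xs. T a b c) = (\<Sum>(a,b,c)\<leftarrow>ys. T a b c))"

definition linear_comult :: "('k::field \<Rightarrow> 'v::ab_group_add \<Rightarrow> 'v) \<Rightarrow> ('v \<Rightarrow> ('v \<times> 'v) list) \<Rightarrow> bool" where
  "linear_comult scale \<Delta> \<longleftrightarrow> (\<forall>B. bilin_form scale B \<longrightarrow> lin_form scale (\<lambda>x. \<Sum>(a,b)\<leftarrow>\<Delta> x. B a b))"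

definition perm_coalgebra :: "('k::field \<Rightarrow> 'v::ab_group_add \<Rightarrow> 'v) \<Rightarrow> ('v \<Rightarrow> ('v \<times> 'v) list) \<Rightarrow> bool" where
  "perm_coalgebra scale \<Delta> \<longleftrightarrow> vector_space scale \<and> linear_comult scale \<Delta> \<and>
     (\<forall>x. teq3 scale [(c,d,b). (a,b) \<leftarrow> \<Delta> x, (c,d) \<leftarrow> \<Delta> a] [(a,c,d). (a,b) \<leftarrow> \<Delta> x, (c,d) \<leftarrow> \<Delta> b]
        \<and> teq3 scale [(a,c,d). (a,b) \<leftarrow> \<Delta> x, (c,d) \<leftarrow> \<Delta> b] [(a,d,c). (a,b) \<leftarrow> \<Delta> x, (c,d) \<leftarrow> \<Delta> b])"

definition sym_tensor :: "('k::field \<Rightarrow> 'v::ab_group_add \<Rightarrow> 'v) \<Rightarrow> ('v \<times> 'v) list \<Rightarrow> bool" where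
  "sym_tensor scale r \<longleftrightarrow> teq2 scale r (map (\<lambda>(a,b). (b,a)) r)"

definition cosymplectic :: "('k::field \<Rightarrow> 'v::ab_group_add \<Rightarrow> 'v) \<Rightarrow> ('v \<Rightarrow> ('v \<times> 'v) list) \<Rightarrow> ('v \<times> 'v) list \<Rightarrow> bool" where
  "cosymplectic scale \<Delta> r \<longleftrightarrow>
     teq3 scale ([(c,d,b). (a,b) \<leftarrow> r, (c,d) \<leftarrow> \<Delta> a] @ [(c,b,d). (a,b) \<leftarrow> r, (c,d) \<leftarrow> \<Delta> a])
                ([(d,b,c). (a,b) \<leftarrow> r, (c,d) \<leftarrow> \<Delta> a] @ [(b,d,c). (a,b) \<leftarrow> r, (c,d) \<leftarrow> \<Delta> a])"

definition ccpYBE :: "('v \<Rightarrow> ('v \<times> 'v) list) \<Rightarrow> ('v \<Rightarrow> 'v \<Rightarrow> 'k::field) \<Rightarrow> bool" where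
  "ccpYBE \<Delta> \<omega> \<longleftrightarrow> (\<forall>x y z.
       (\<Sum>(a,b)\<leftarrow>\<Delta> x. \<omega> a z * \<omega> b y) - (\<Sum>(a,b)\<leftarrow>\<Delta> z. \<omega> x a * \<omega> y b)
     + (\<Sum>(a,b)\<leftarrow>\<Delta> y. \<omega> a z * \<omega> x b) - (\<Sum>(a,b)\<leftarrow>\<Delta> y. \<omega> x a * \<omega> b z) = 0)"

definition omega_prod :: "('k::field \<Rightarrow> 'v::ab_group_add \<Rightarrow> 'v) \<Rightarrow> ('v \<Rightarrow> ('v \<times> 'v) list) \<Rightarrow> ('v \<Rightarrow> 'v \<Rightarrow> 'k) \<Rightarrow> 'v \<Rightarrow> 'v \<Rightarrow> 'v" where
  "omega_prod scale \<Delta> \<omega> x y =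
       (\<Sum>(a,b)\<leftarrow>\<Delta> x. scale (\<omega> b y) a) + (\<Sum>(a,b)\<leftarrow>\<Delta> y. scale (\<omega> x b) a)
     - (\<Sum>(a,b)\<leftarrow>\<Delta> y. scale (\<omega> x a) b)"

definition cpYBE :: "('k::field \<Rightarrow> 'v::ab_group_add \<Rightarrow> 'v) \<Rightarrow> ('v \<Rightarrow> 'v \<Rightarrow> 'v) \<Rightarrow> ('v \<times> 'v) list \<Rightarrow> bool" where
  "cpYBE scale m r \<longleftrightarrow>
     teq3 scale ([(m a c, d, b). (a,b) \<leftarrow> r, (c,d) \<leftarrow> r] @ [(c, m a d, b). (a,b) \<leftarrow> r, (c,d) \<leftarrow> r])
                ([(a, c, m b d). (a,b) \<leftarrow> r, (c,d) \<leftarrow> r] @ [(a, m b c, d). (a,b) \<leftarrow> r, (c,d) \<leftarrow> r])"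

definition S_map :: "('k::field \<Rightarrow> 'v::ab_group_add \<Rightarrow> 'v) \<Rightarrow> ('v \<times> 'v) list \<Rightarrow> ('v \<Rightarrow> 'v \<Rightarrow> 'k) \<Rightarrow> 'v \<Rightarrow> 'v" where
  "S_map scale r \<omega> x = (\<Sum>(a,b)\<leftarrow>r. scale (\<omega> b x) a)"

definition nijenhuis_perm_coalgebra :: "('k::field \<Rightarrow> 'v::ab_group_add \<Rightarrow> 'v) \<Rightarrow> ('v \<Rightarrow> ('v \<times> 'v) list) \<Rightarrow> ('v \<Rightarrow> 'v) \<Rightarrow> bool" where
  "nijenhuis_perm_coalgebra scale \<Delta> S \<longleftrightarrow> perm_coalgebra scale \<Delta> \<and> Vector_Spaces.linear scale scale S \<and>
     (\<forall>x. teq2 scale ([(S a, S b). (a,b) \<leftarrow> \<Delta> x] @ \<Delta> (S (S x)))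
                      ([(S a, b). (a,b) \<leftarrow> \<Delta> (S x)] @ [(a, S b). (a,b) \<leftarrow> \<Delta> (S x)]))"

end

theory Submission
  imports Defs
begin

lemma vs_field: "vector_space ((*) :: 'k::field \<Rightarrow> 'k \<Rightarrow> 'k)"
  by unfold_locales (auto simp: algebra_simps)

lemma lin_formI:
  assumes "vector_space s" "\<And>x y. f (x+y) = f x + f y" "\<And>c x. f (s c x) = c * f x"
  shows "lin_form s f"
  unfolding lin_form_def Vector_Spaces.linear_iff using vs_field assms by auto

lemma lin_add: "lin_form s f \<Longrightarrow> f (x+y) = f x + f y"
  unfolding lin_form_def Vector_Spaces.linear_iff by auto
lemma lin_scale: "lin_form s f \<Longrightarrow> f (s c x) = c * f x"
  unfolding lin_form_def Vector_Spaces.linear_iff by auto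
lemma lin_vs: "lin_form s f \<Longrightarrow> vector_space s"
  unfolding lin_form_def Vector_Spaces.linear_iff by auto
lemma lin_zero: "lin_form s f \<Longrightarrow> f 0 = 0"
  using lin_add[of s f 0 0] by (metis add.right_neutral add_left_cancel)
lemma lin_diff: "lin_form s f \<Longrightarrow> f (x - y) = f x - f y"
  using lin_add[of s f "x - y" y] by (simp add: algebra_simps)
lemma lin_sum: "lin_form s f \<Longrightarrow> f (sum_list (map g L)) = sum_list (map (\<lambda>x. f (g x)) L)"
  by (induction L) (auto simp: lin_add lin_zero)
lemma lin_sum2: "lin_form s f \<Longrightarrow> f (\<Sum>(a,b)\<leftarrow>L. s (c a b) (h a b)) = (\<Sum>(a,b)\<leftarrow>L. c a b * f (h a b))"
  by (induction L) (auto simp: lin_add lin_zero lin_scale)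

lemma sl: "sum_list (map f xs) = (\<Sum>i<length xs. f (xs ! i))"
  by (simp add: sum_list_sum_nth atLeast0LessThan)

lemma sum_concat_map: "sum_list (map g (concat (map h L))) = sum_list (map (\<lambda>x. sum_list (map g (h x))) L)"
  by (induction L) auto


lemma swapD: "(\<Sum>k<length (D::'a list). \<Sum>j<length (R::'b list). f k j) = (\<Sum>j<length R. \<Sum>k<length D. (f k j :: 'k::comm_monoid_add))"
  by (rule sum.swap)

lemma bil_l: "bilin_form s B \<Longrightarrow> lin_form s (\<lambda>x. B x y)"
  unfolding bilin_form_def by auto
lemma bil_r: "bilin_form s B \<Longrightarrow> lin_form s (B x)"
  unfolding bilin_form_def by auto
lemma bilinI: "(\<And>y. lin_form s (\<lambda>x. B x y)) \<Longrightarrow> (\<And>x. lin_form s (B x)) \<Longrightarrow> bilin_form s B"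
  unfolding bilin_form_def by auto
lemma trilinI: "(\<And>y z. lin_form s (\<lambda>x. T x y z)) \<Longrightarrow> (\<And>x z. lin_form s (\<lambda>y. T x y z)) \<Longrightarrow> (\<And>x y. lin_form s (T x y)) \<Longrightarrow> trilin_form s T"
  unfolding trilin_form_def by auto

lemma lin_mult_r: "lin_form s f \<Longrightarrow> lin_form s (\<lambda>x. f x * c)"
  by (rule lin_formI) (auto simp: lin_vs lin_add lin_scale algebra_simps)
lemma lin_mult_l: "lin_form s f \<Longrightarrow> lin_form s (\<lambda>x. c * f x)"
  by (rule lin_formI) (auto simp: lin_vs lin_add lin_scale algebra_simps)

locale ctx =
  fixes s :: "'k::field \<Rightarrow> 'v::ab_group_add \<Rightarrow> 'v"
    and \<Delta> :: "'v \<Rightarrow> ('v \<times> 'v) list"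
    and r :: "('v \<times> 'v) list"
    and \<omega> :: "'v \<Rightarrow> 'v \<Rightarrow> 'k"
  assumes vs: "vector_space s"
    and lc: "linear_comult s \<Delta>"
    and symr: "sym_tensor s r"
    and bw: "bilin_form s \<omega>"
    and ws: "\<And>x y. \<omega> x y = \<omega> y x"
begin

sublocale vs: vector_space s by (rule vs)

abbreviation S where "S \<equiv> S_map s r \<omega>"

lemma scale_sum: "s c (\<Sum>(a,b)\<leftarrow>L. s (f a b) a) = (\<Sum>(a,b)\<leftarrow>L. s (c * f a b) a)"
proof (induction L)
  case Nil then show ?case using vs.scale_zero_right by simp
next
  case (Cons p L) then show ?case
    by (cases p) (simp add: vs.scale_right_distrib)
qed

lemma sum_add2: "(\<Sum>(a,b)\<leftarrow>L. s (f a b + g a b) a) = (\<Sum>(a,b)\<leftarrow>L. s (f a b) a) + (\<Sum>(a,b)\<leftarrow>L. s (g a b) a)"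
  by (induction L) (auto simp: vs.scale_left_distrib algebra_simps)

lemma S_add: "S (x + y) = S x + S y"
  unfolding S_map_def using lin_add[OF bil_r[OF bw]] by (simp add: sum_add2)
lemma S_scale: "S (s c x) = s c (S x)"
  unfolding S_map_def using lin_scale[OF bil_r[OF bw]] by (simp add: scale_sum)

lemma lin_S: "lin_form s l \<Longrightarrow> lin_form s (\<lambda>x. l (S x))"
  by (rule lin_formI) (auto simp: vs S_add S_scale lin_add lin_scale)

lemma lin_D: "bilin_form s G \<Longrightarrow> lin_form s (\<lambda>x. \<Sum>(a,b)\<leftarrow>\<Delta> x. G a b)"
  using lc unfolding linear_comult_def by auto

lemma lin_sumL: "(\<And>i. lin_form s (g i)) \<Longrightarrow> lin_form s (\<lambda>x. \<Sum>i\<leftarrow>L. g i x)"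
proof (induction L)
  case Nil then show ?case by (intro lin_formI) (auto simp: vs)
next
  case (Cons a L)
  have h: "lin_form s (\<lambda>x. \<Sum>i\<leftarrow>L. g i x)" using Cons by blast
  show ?case by (intro lin_formI) (simp_all add: vs lin_add[OF h] lin_add[OF Cons.prems] lin_scale[OF h] lin_scale[OF Cons.prems] algebra_simps sum_list_addf sum_list_const_mult)
qed

lemma LS1: "bilin_form s B \<Longrightarrow> B (S y) z = (\<Sum>(p,q)\<leftarrow>r. \<omega> q y * B p z)"
  unfolding S_map_def by (rule lin_sum2[OF bil_l])
lemma LS2: "bilin_form s B \<Longrightarrow> B z (S y) = (\<Sum>(p,q)\<leftarrow>r. \<omega> q y * B z p)"
  unfolding S_map_def by (rule lin_sum2[OF bil_r])
lemma LD: "bilin_form s G \<Longrightarrow> (\<Sum>(a,b)\<leftarrow>\<Delta> (S y). G a b) = (\<Sum>(p,q)\<leftarrow>r. \<omega> q y * (\<Sum>(a,b)\<leftarrow>\<Delta> p. G a b))"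
  unfolding S_map_def by (rule lin_sum2[OF lin_D])

lemma Sym: "bilin_form s F \<Longrightarrow> (\<Sum>(u,v)\<leftarrow>r. F u v) = (\<Sum>(u,v)\<leftarrow>r. F v u)"
  using symr unfolding sym_tensor_def teq2_def by (auto simp: o_def split_def)

lemma LS1': "bilin_form s B \<Longrightarrow> B (S y) z = (\<Sum>(p,q)\<leftarrow>r. \<omega> p y * B q z)"
  unfolding LS1 apply (rule Sym) apply (rule bilinI)
  subgoal by (rule lin_mult_l, erule bil_l)
  subgoal by (rule lin_mult_r[OF bil_l[OF bw]])
  done
lemma LS2': "bilin_form s B \<Longrightarrow> B z (S y) = (\<Sum>(p,q)\<leftarrow>r. \<omega> p y * B z q)"
  unfolding LS2 apply (rule Sym) apply (rule bilinI)
  subgoal by (rule lin_mult_l, erule bil_r)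
  subgoal by (rule lin_mult_r[OF bil_l[OF bw]])
  done

definition KS where "KS f = (\<Sum>(u,v)\<leftarrow>r. \<Sum>(a,b)\<leftarrow>\<Delta> u. f a b v)"

lemma KSsym: "trilin_form s f \<Longrightarrow> KS f = (\<Sum>(u,v)\<leftarrow>r. \<Sum>(a,b)\<leftarrow>\<Delta> v. f a b u)"
proof -
  assume t: "trilin_form s f"
  have b: "bilin_form s (\<lambda>u v. \<Sum>(a,b)\<leftarrow>\<Delta> v. f a b u)"
  proof (rule bilinI)
    fix v show "lin_form s (\<lambda>u. \<Sum>(a,b)\<leftarrow>\<Delta> v. f a b u)"
      unfolding split_def by (rule lin_sumL) (use t in \<open>simp add: trilin_form_def\<close>)
  next
    fix u show "lin_form s (\<lambda>v. \<Sum>(a,b)\<leftarrow>\<Delta> v. f a b u)"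
      by (rule lin_D, rule bilinI) (use t in \<open>simp_all add: trilin_form_def\<close>)
  qed
  show ?thesis unfolding KS_def by (rule Sym[OF b, symmetric])
qed

end

context ctx begin
lemma swapDr: "(\<Sum>k<length (\<Delta> y). \<Sum>j<length r. f k j) = (\<Sum>j<length r. \<Sum>k<length (\<Delta> y). (f k j :: 'z::comm_monoid_add))"
  by (rule sum.swap)
lemma swapRf: "(\<Sum>i<length r. \<Sum>j<length r. \<Sum>k<length (\<Delta> (fst (r ! j))). f i j k) = (\<Sum>j<length r. \<Sum>i<length r. \<Sum>k<length (\<Delta> (fst (r ! j))). (f i j k :: 'z::comm_monoid_add))"
  by (rule sum.swap)
lemma swapRs: "(\<Sum>i<length r. \<Sum>j<length r. \<Sum>k<length (\<Delta> (snd (r ! j))). f i j k) = (\<Sum>j<length r. \<Sum>i<length r. \<Sum>k<length (\<Delta> (snd (r ! j))). (f i j k :: 'z::comm_monoid_add))"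
  by (rule sum.swap)

lemmas nf = sl split_def sum_distrib_left sum_distrib_right swapDr swapRf swapRs ws mult_ac sum.distrib sum_subtractf ring_distribs

lemma tri_test:
  assumes bb: "bilin_form s \<beta>"
  shows "trilin_form s (\<lambda>a b v. \<beta> v (S b) * \<omega> a x)"
  apply (intro trilinI)
  apply (rule lin_mult_l lin_mult_r; (rule lin_S)?; rule bil_l bil_r; rule bw bb)+
  done

end

locale ctx2 = ctx +
  assumes ccp: "ccpYBE \<Delta> \<omega>"
    and cos: "cosymplectic s \<Delta> r"
    and cpy: "cpYBE s (omega_prod s \<Delta> \<omega>) r"
begin

lemma L1:
  assumes bb: "bilin_form s \<beta>"
  shows "(\<Sum>(a,b)\<leftarrow>\<Delta> x. \<beta> (S a) (S b)) = KS (\<lambda>a b v. \<beta> v (S b) * \<omega> a x) - KS (\<lambda>a b v. \<beta> (S a) v * \<omega> b x) + KS (\<lambda>a b v. \<beta> (S b) v * \<omega> a x)"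
proof -
  have e1: "(\<Sum>(a,b)\<leftarrow>\<Delta> x. \<beta> (S a) (S b)) = (\<Sum>(u,v)\<leftarrow>r. \<Sum>(u',v')\<leftarrow>r. \<beta> u u' * (\<Sum>(a,b)\<leftarrow>\<Delta> x. \<omega> a v * \<omega> b v'))"
    apply (simp only: LS1[OF bb])
    apply (simp only: LS2[OF bb])
    apply (simp add: nf)
    done
  have e2: "(\<Sum>(a,b)\<leftarrow>\<Delta> x. \<omega> a v * \<omega> b v') = (\<Sum>(a,b)\<leftarrow>\<Delta> v. \<omega> x a * \<omega> v' b) - (\<Sum>(a,b)\<leftarrow>\<Delta> v'. \<omega> a v * \<omega> x b) + (\<Sum>(a,b)\<leftarrow>\<Delta> v'. \<omega> x a * \<omega> b v)" for v v'
  proof -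
    have "(\<Sum>(a,b)\<leftarrow>\<Delta> x. \<omega> a v * \<omega> b v') - (\<Sum>(a,b)\<leftarrow>\<Delta> v. \<omega> x a * \<omega> v' b)
     + (\<Sum>(a,b)\<leftarrow>\<Delta> v'. \<omega> a v * \<omega> x b) - (\<Sum>(a,b)\<leftarrow>\<Delta> v'. \<omega> x a * \<omega> b v) = 0"
      using ccp unfolding ccpYBE_def by blast
    then show ?thesis by (simp add: algebra_simps)
  qed
  have t1: "trilin_form s (\<lambda>a b v. \<beta> v (S b) * \<omega> a x)"
    apply (intro trilinI)
    apply (rule lin_mult_l lin_mult_r; (rule lin_S)?; rule bil_l bil_r; rule bw bb)+
    done
  have t2: "trilin_form s (\<lambda>a b v. \<beta> (S a) v * \<omega> b x)"
    apply (intro trilinI)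
    apply (rule lin_mult_l lin_mult_r; (rule lin_S)?; rule bil_l bil_r; rule bw bb)+
    done
  have t3: "trilin_form s (\<lambda>a b v. \<beta> (S b) v * \<omega> a x)"
    apply (intro trilinI)
    apply (rule lin_mult_l lin_mult_r; (rule lin_S)?; rule bil_l bil_r; rule bw bb)+
    done
  show ?thesis
    unfolding e1 e2 KSsym[OF t1] KSsym[OF t2] KSsym[OF t3]
    apply (simp only: LS1[OF bb] LS2[OF bb])
    apply (simp add: nf algebra_simps)
    done
qed


lemma R1:
  assumes bb: "bilin_form s \<beta>"
  shows "(\<Sum>(a,b)\<leftarrow>\<Delta> (S x). \<beta> (S a) b) = KS (\<lambda>a b v. \<beta> (S a) b * \<omega> v x)"
proof -
  have g: "bilin_form s (\<lambda>a b. \<beta> (S a) b)"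
    by (intro bilinI; (rule lin_S)?; rule bil_l bil_r; rule bw bb)
  show ?thesis unfolding LD[OF g] KS_def by (simp add: nf)
qed

lemma R2:
  assumes bb: "bilin_form s \<beta>"
  shows "(\<Sum>(a,b)\<leftarrow>\<Delta> (S x). \<beta> a (S b)) = KS (\<lambda>a b v. \<beta> a (S b) * \<omega> v x)"
proof -
  have g: "bilin_form s (\<lambda>a b. \<beta> a (S b))"
    by (intro bilinI; (rule lin_S)?; rule bil_l bil_r; rule bw bb)
  show ?thesis unfolding LD[OF g] KS_def by (simp add: nf)
qed

lemma L2:
  assumes bb: "bilin_form s \<beta>"
  shows "(\<Sum>(a,b)\<leftarrow>\<Delta> (S (S x)). \<beta> a b) = KS (\<lambda>a b v. \<beta> a b * \<omega> v (S x))"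
  unfolding LD[OF bb] KS_def by (simp add: nf)

lemma Cos:
  assumes bb: "bilin_form s \<beta>"
  shows "KS (\<lambda>a b v. \<beta> a b * \<omega> v (S x)) + KS (\<lambda>a b v. \<beta> a v * \<omega> b (S x))
       = KS (\<lambda>a b v. \<beta> b v * \<omega> a (S x)) + KS (\<lambda>a b v. \<beta> v b * \<omega> a (S x))"
proof -
  have t0: "trilin_form s (\<lambda>a b v. \<beta> a b * \<omega> v (S x))"
    by (intro trilinI; rule lin_mult_l lin_mult_r; (rule lin_S)?; rule bil_l bil_r; rule bw bb)
  show ?thesis using cos[unfolded cosymplectic_def teq3_def, rule_format, OF t0]
    by (simp add: KS_def sum_concat_map o_def split_def)
qed

lemma Y:
  assumes bb: "bilin_form s \<beta>"
  shows "(\<Sum>(u,v)\<leftarrow>r. \<Sum>(c,d)\<leftarrow>r. \<beta> (omega_prod s \<Delta> \<omega> u c) d * \<omega> v x)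
       + (\<Sum>(u,v)\<leftarrow>r. \<Sum>(c,d)\<leftarrow>r. \<beta> c (omega_prod s \<Delta> \<omega> u d) * \<omega> v x)
       = (\<Sum>(u,v)\<leftarrow>r. \<Sum>(c,d)\<leftarrow>r. \<beta> u c * \<omega> (omega_prod s \<Delta> \<omega> v d) x)
       + (\<Sum>(u,v)\<leftarrow>r. \<Sum>(c,d)\<leftarrow>r. \<beta> u (omega_prod s \<Delta> \<omega> v c) * \<omega> d x)"
proof -
  have t0: "trilin_form s (\<lambda>a b v. \<beta> a b * \<omega> v x)"
    by (intro trilinI; rule lin_mult_l lin_mult_r; (rule lin_S)?; rule bil_l bil_r; rule bw bb)
  show ?thesis using cpy[unfolded cpYBE_def teq3_def, rule_format, OF t0]
    by (simp add: sum_concat_map o_def split_def)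
qed


lemma PA:
  assumes bb: "bilin_form s \<beta>"
  shows "(\<Sum>(u,v)\<leftarrow>r. \<Sum>(c,d)\<leftarrow>r. \<beta> (omega_prod s \<Delta> \<omega> u c) d * \<omega> v x)
    = KS (\<lambda>a b v. \<beta> a (S b) * \<omega> v x) + KS (\<lambda>a b v. \<beta> a v * \<omega> b (S x)) - KS (\<lambda>a b v. \<beta> b v * \<omega> a (S x))"
  unfolding omega_prod_def KS_def
  apply (simp only: lin_add[OF bil_l[OF bb]] lin_diff[OF bil_l[OF bb]] lin_sum2[OF bil_l[OF bb]])
  apply (simp only: LS2'[OF bb] LS2[OF bw])
  apply (simp add: nf)
  done

lemma PB:
  assumes bb: "bilin_form s \<beta>"
  shows "(\<Sum>(u,v)\<leftarrow>r. \<Sum>(c,d)\<leftarrow>r. \<beta> c (omega_prod s \<Delta> \<omega> u d) * \<omega> v x)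
    = KS (\<lambda>a b v. \<beta> (S b) a * \<omega> v x) + KS (\<lambda>a b v. \<beta> v a * \<omega> b (S x)) - KS (\<lambda>a b v. \<beta> v b * \<omega> a (S x))"
proof -
  have t11: "trilin_form s (\<lambda>a b v. \<beta> v a * \<omega> b (S x))"
    by (intro trilinI; rule lin_mult_l lin_mult_r; (rule lin_S)?; rule bil_l bil_r; rule bw bb)
  have t9: "trilin_form s (\<lambda>a b v. \<beta> v b * \<omega> a (S x))"
    by (intro trilinI; rule lin_mult_l lin_mult_r; (rule lin_S)?; rule bil_l bil_r; rule bw bb)
  show ?thesis
  unfolding omega_prod_def KSsym[OF t11] KSsym[OF t9] KS_def
  apply (simp only: lin_add[OF bil_r[OF bb]] lin_diff[OF bil_r[OF bb]] lin_sum2[OF bil_r[OF bb]])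
  apply (simp only: LS1[OF bb] LS2[OF bw])
  apply (simp add: nf)
  done
qed

lemma PC:
  assumes bb: "bilin_form s \<beta>"
  shows "(\<Sum>(u,v)\<leftarrow>r. \<Sum>(c,d)\<leftarrow>r. \<beta> u c * \<omega> (omega_prod s \<Delta> \<omega> v d) x)
    = KS (\<lambda>a b v. \<beta> v (S b) * \<omega> a x) + KS (\<lambda>a b v. \<beta> (S b) v * \<omega> a x) - KS (\<lambda>a b v. \<beta> (S a) v * \<omega> b x)"
proof -
  have t1: "trilin_form s (\<lambda>a b v. \<beta> v (S b) * \<omega> a x)"
    by (intro trilinI; rule lin_mult_l lin_mult_r; (rule lin_S)?; rule bil_l bil_r; rule bw bb)
  have t3: "trilin_form s (\<lambda>a b v. \<beta> (S b) v * \<omega> a x)"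
    by (intro trilinI; rule lin_mult_l lin_mult_r; (rule lin_S)?; rule bil_l bil_r; rule bw bb)
  have t2: "trilin_form s (\<lambda>a b v. \<beta> (S a) v * \<omega> b x)"
    by (intro trilinI; rule lin_mult_l lin_mult_r; (rule lin_S)?; rule bil_l bil_r; rule bw bb)
  show ?thesis
  unfolding omega_prod_def KSsym[OF t1] KSsym[OF t3] KSsym[OF t2]
  apply (simp only: lin_add[OF bil_l[OF bw]] lin_diff[OF bil_l[OF bw]] lin_sum2[OF bil_l[OF bw]])
  apply (simp only: LS1[OF bb] LS2[OF bb])
  apply (simp add: nf)
  done
qed

lemma PD:
  assumes bb: "bilin_form s \<beta>"
  shows "(\<Sum>(u,v)\<leftarrow>r. \<Sum>(c,d)\<leftarrow>r. \<beta> u (omega_prod s \<Delta> \<omega> v c) * \<omega> d x)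
    = KS (\<lambda>a b v. \<beta> v a * \<omega> b (S x)) + KS (\<lambda>a b v. \<beta> (S b) a * \<omega> v x) - KS (\<lambda>a b v. \<beta> (S a) b * \<omega> v x)"
proof -
  have t11: "trilin_form s (\<lambda>a b v. \<beta> v a * \<omega> b (S x))"
    by (intro trilinI; rule lin_mult_l lin_mult_r; (rule lin_S)?; rule bil_l bil_r; rule bw bb)
  show ?thesis
  unfolding omega_prod_def KSsym[OF t11] KS_def
  apply (simp only: lin_add[OF bil_r[OF bb]] lin_diff[OF bil_r[OF bb]] lin_sum2[OF bil_r[OF bb]])
  apply (simp only: LS1[OF bb] LS2[OF bw])
  apply (simp add: nf)
  done
qed

lemma MainEq:
  assumes bb: "bilin_form s \<beta>"
  shows "(\<Sum>(a,b)\<leftarrow>\<Delta> x. \<beta> (S a) (S b)) + (\<Sum>(a,b)\<leftarrow>\<Delta> (S (S x)). \<beta> a b)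
       = (\<Sum>(a,b)\<leftarrow>\<Delta> (S x). \<beta> (S a) b) + (\<Sum>(a,b)\<leftarrow>\<Delta> (S x). \<beta> a (S b))"
  using Y[OF bb, of x] Cos[OF bb, of x]
  unfolding L1[OF bb] L2[OF bb] R1[OF bb] R2[OF bb] PA[OF bb] PB[OF bb] PC[OF bb] PD[OF bb]
  by algebra

end

theorem theorem3p13:
  fixes scale :: "'k::field \<Rightarrow> 'v::ab_group_add \<Rightarrow> 'v"
    and \<Delta> :: "'v \<Rightarrow> ('v \<times> 'v) list"
    and r :: "('v \<times> 'v) list"
    and \<omega> :: "'v \<Rightarrow> 'v \<Rightarrow> 'k"
  assumes "perm_coalgebra scale \<Delta>"
    and "sym_tensor scale r"
    and "cosymplectic scale \<Delta> r"
    and "bilin_form scale \<omega>"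
    and "\<forall>x y. \<omega> x y = \<omega> y x"
    and "ccpYBE \<Delta> \<omega>"
    and "cpYBE scale (omega_prod scale \<Delta> \<omega>) r"
  shows "nijenhuis_perm_coalgebra scale \<Delta> (S_map scale r \<omega>)"
proof -
  have pc: "vector_space scale" "linear_comult scale \<Delta>"
    using assms(1) unfolding perm_coalgebra_def by auto
  interpret ctx2 scale \<Delta> r \<omega>
    using assms pc by (simp add: ctx2_def ctx_def ctx2_axioms_def)
  show ?thesis
    unfolding nijenhuis_perm_coalgebra_def
  proof (intro conjI allI)
    show "perm_coalgebra scale \<Delta>" by (rule assms(1))
    show "Vector_Spaces.linear scale scale (S_map scale r \<omega>)"
      by (simp add: Vector_Spaces.linear_iff pc S_add S_scale)
  next
    fix x
    show "teq2 scale ([(S_map scale r \<omega> a, S_map scale r \<omega> b). (a,b) \<leftarrow> \<Delta> x] @ \<Delta> (S_map scale r \<omega> (S_map scale r \<omega> x)))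
                      ([(S_map scale r \<omega> a, b). (a,b) \<leftarrow> \<Delta> (S_map scale r \<omega> x)] @ [(a, S_map scale r \<omega> b). (a,b) \<leftarrow> \<Delta> (S_map scale r \<omega> x)])"
      unfolding teq2_def
    proof (intro allI impI)
      fix B assume bb: "bilin_form scale B"
      show "(\<Sum>(a,b)\<leftarrow>[(S_map scale r \<omega> a, S_map scale r \<omega> b). (a,b) \<leftarrow> \<Delta> x] @ \<Delta> (S_map scale r \<omega> (S_map scale r \<omega> x)). B a b) =
            (\<Sum>(a,b)\<leftarrow>[(S_map scale r \<omega> a, b). (a,b) \<leftarrow> \<Delta> (S_map scale r \<omega> x)] @ [(a, S_map scale r \<omega> b). (a,b) \<leftarrow> \<Delta> (S_map scale r \<omega> x)]. B a b)"
        using MainEq[OF bb, of x] by (simp add: sum_concat_map o_def split_def)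
    qed
  qed
qed

end
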